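(* Let $N\ge0$ be an even integer and let $a=(a_0,a_1,\dots,a_N)\in\mathbb N^{N+1}$ satisfy $a_0\le a_1\le\dots\le a_N$, $a_0<a_2<a_4<\cdots$ and $a_1<a_3<a_5<\cdots$. Let $\mathcal J=\{i\in[0,N]: a_i$ appears exactly once in the sequence $a\}$; then $\mathcal J=\{i_0<i_1<\dots<i_{2M}\}$ for some $M\in\mathbb N$ with $i_s\equiv s\pmod 2$, and $i_{s+1}=i_s+2m_s+1$ with $m_s\in\mathbb N$ for $s\in[0,2M-1]$. Let $\mathcal E$ be the set of $b=(b_0,\dots,b_N)\in\mathbb N^{N+1}$ with $b_0<b_2<b_4<\cdots$, $b_1<b_3<b_5<\cdots$ and such that the multisets $\{b_0,\dots,b_N\}$ and $\{a_0,\dots,a_N\}$ coincide. For $b\in\mathcal E$ let $\hat b=(b_0,b_1+1,b_2+1,b_3+2,b_4+2,\dots,b_{N-1}+N/2,b_N+N/2)$, i.e. $\hat b_i=b_i+\lceil i/2\rceil$. For $X\subset\{1,3,\dots,2M-1\}$ define $a^X\in\mathcal E$ by: for $s\in X$, $(a^X_{i_s},a^X_{i_s+1},a^X_{i_s+2},a^X_{i_s+3},\dots,a^X_{i_s+2m_s},a^X_{i_s+2m_s+1})=(a_{i_s+1},a_{i_s},a_{i_s+3},a_{i_s+2},\dots,a_{i_s+2m_s+1},a_{i_s+2m_s})$, and $a^X_i=a_i$ for all other $i\in[0,N]$. If $b\in\mathcal E$ is such that the multiset $\{\hat b_0,\dots,\hat b_N\}$ equals the multiset $\{\hat a_0,\dots,\hat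 a_N\}$, then there exists $X\subset\{1,3,\dots,2M-1\}$ with $b=a^X$. *)

theory Defs
  imports Main "HOL-Library.Multiset"
begin

definition parity_strict :: "nat list \<Rightarrow> bool" where
  "parity_strict b \<longleftrightarrow> (\<forall>i. i + 2 < length b \<longrightarrow> b ! i < b ! (i + 2))"

definition E_set :: "nat list \<Rightarrow> nat list set" where
  "E_set a = {b. length b = length a \<and> parity_strict b \<and> mset b = mset a}"

definition hat :: "nat list \<Rightarrow> nat list" where
  "hat b = map (\<lambda>i. b ! i + (i + 1) div 2) [0..<length b]"

definition Jset :: "nat list \<Rightarrow> nat set" where
  "Jset a = {i. i < length a \<and> count (mset a) (a ! i) = 1}"

definition idx :: "nat list \<Rightarrow> nat \<Rightarrow> nat" where
  "idx a s = sorted_list_of_set (Jset a) ! s"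

definition mm :: "nat list \<Rightarrow> nat \<Rightarrow> nat" where
  "mm a s = (idx a (s + 1) - idx a s - 1) div 2"

definition MM :: "nat list \<Rightarrow> nat" where
  "MM a = (card (Jset a) - 1) div 2"

definition aX :: "nat list \<Rightarrow> nat set \<Rightarrow> nat list" where
  "aX a X = map (\<lambda>i.
      if (\<exists>s\<in>X. idx a s \<le> i \<and> i \<le> idx a s + 2 * mm a s + 1 \<and> even (i - idx a s))
      then a ! (i + 1)
      else if (\<exists>s\<in>X. idx a s \<le> i \<and> i \<le> idx a s + 2 * mm a s + 1 \<and> odd (i - idx a s))
      then a ! (i - 1)
      else a ! i) [0..<length a]"

end

theory Submission
  imports Defs
begin

fun hp :: "nat \<Rightarrow> nat list \<Rightarrow> nat list" where
  "hp c [] = []"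
| "hp c [x] = [x + c]"
| "hp c (x # y # xs) = (x + c) # (y + c) # hp (Suc c) xs"

lemma hp_length[simp]: "length (hp c xs) = length xs"
  by (induction c xs rule: hp.induct) auto

lemma hp_nth: "i < length xs \<Longrightarrow> hp c xs ! i = xs ! i + c + i div 2"
proof (induction c xs arbitrary: i rule: hp.induct)
  case (3 c x y xs)
  show ?case
  proof (cases i)
    case 0 then show ?thesis by simp
  next
    case (Suc j) note j = this
    show ?thesis
    proof (cases j)
      case 0 then show ?thesis using j by simp
    next
      case (Suc k) then show ?thesis using j 3 by simp
    qed
  qed
qed auto

lemma hp_set: "v \<in> set (hp c zs) \<Longrightarrow> \<exists>z\<in>set zs. z + c \<le> v"
  by (induction c zs rule: hp.induct) force+

lemma hat_length[simp]: "length (hat b) = length b" by (simp add: hat_def)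
lemma hat_nth: "i < length b \<Longrightarrow> hat b ! i = b ! i + (i + 1) div 2"
  by (simp add: hat_def del: upt_Suc)

lemma hat_Cons: "hat (x # xs) = x # hp 1 xs"
proof (rule nth_equalityI)
  show "length (hat (x # xs)) = length (x # hp 1 xs)" by simp
  fix i assume "i < length (hat (x # xs))"
  then have i: "i < Suc (length xs)" by simp
  show "hat (x # xs) ! i = (x # hp 1 xs) ! i"
  proof (cases i)
    case 0 then show ?thesis by (simp add: hat_nth)
  next
    case (Suc j) then show ?thesis using i
      by (simp add: hat_nth hp_nth)
  qed
qed

lemma ps_tail: "parity_strict (x # xs) \<Longrightarrow> parity_strict xs"
  unfolding parity_strict_def
proof (intro allI impI)
  fix i assume h: "\<forall>i. i + 2 < length (x # xs) \<longrightarrow> (x # xs) ! i < (x # xs) ! (i + 2)"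
    and i: "i + 2 < length xs"
  have "Suc i + 2 < length (x # xs)" using i by simp
  then have "(x # xs) ! Suc i < (x # xs) ! (Suc i + 2)" using h by blast
  then show "xs ! i < xs ! (i + 2)" by simp
qed

lemma ps_chain: "parity_strict zs \<Longrightarrow> i + 2 * d < length zs \<Longrightarrow> 0 < d \<Longrightarrow> zs ! i < zs ! (i + 2 * d)"
proof (induction d)
  case 0 then show ?case by simp
next
  case (Suc d)
  show ?case
  proof (cases d)
    case 0 then show ?thesis using Suc.prems unfolding parity_strict_def by simp
  next
    case (Suc e)
    then have "zs ! i < zs ! (i + 2 * d)" using Suc.IH Suc.prems by simp
    moreover have "zs ! (i + 2 * d) < zs ! (i + 2 * d + 2)"
      using Suc.prems unfolding parity_strict_def by simp
    ultimately show ?thesis by simp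
  qed
qed

lemma ps_min: assumes "parity_strict (p # q # ys)" "z \<in> set ys" shows "min p q < z"
proof -
  obtain j where j: "j < length ys" "z = ys ! j" using assms(2) by (auto simp: in_set_conv_nth)
  show ?thesis
  proof (cases "even j")
    case True
    define d where "d = j div 2 + 1"
    have jd: "0 + 2 * d = j + 2" "0 < d" using True unfolding d_def by auto
    have "(p # q # ys) ! 0 < (p # q # ys) ! (0 + 2 * d)"
      by (rule ps_chain[OF assms(1)]) (use jd j in simp_all)
    then have "p < z" using j jd by simp
    then show ?thesis by simp
  next
    case False
    define d where "d = (j + 1) div 2"
    have jd: "1 + 2 * d = j + 2" "0 < d" using False unfolding d_def by (auto elim!: oddE)
    have "(p # q # ys) ! 1 < (p # q # ys) ! (1 + 2 * d)"
      by (rule ps_chain[OF assms(1)]) (use jd j in simp_all)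
    then have "q < z" using j jd by simp
    then show ?thesis by simp
  qed
qed

definition blk :: "nat list \<Rightarrow> nat list \<Rightarrow> bool" where
  "blk xs ys \<longleftrightarrow> (\<forall>i. even i \<longrightarrow> i + 1 < length xs \<longrightarrow>
     (ys ! i = xs ! i \<and> ys ! (i+1) = xs ! (i+1)) \<or> (ys ! i = xs ! (i+1) \<and> ys ! (i+1) = xs ! i))"

lemma L1:
  "length xs = 2 * k \<Longrightarrow> length ys = length xs \<Longrightarrow> sorted xs \<Longrightarrow> parity_strict ys \<Longrightarrow>
   mset ys = mset xs \<Longrightarrow> mset (hp c ys) = mset (hp c xs) \<Longrightarrow> blk xs ys"
proof (induction k arbitrary: xs ys c)
  case 0 then show ?case by (simp add: blk_def)
next
  case (Suc k)
  have lx: "length xs = Suc (Suc (2 * k))" using Suc.prems(1) by simp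
  then obtain x y xs' where xs: "xs = x # y # xs'" by (auto simp: length_Suc_conv)
  have ly: "length ys = Suc (Suc (2 * k))" using Suc.prems(1,2) by simp
  then obtain p q ys' where ys: "ys = p # q # ys'" by (auto simp: length_Suc_conv)
  have len: "length xs' = 2 * k" "length ys' = length xs'" using Suc.prems(1,2) xs ys by auto
  have sxs: "x \<le> y" "\<forall>z\<in>set xs'. y \<le> z" "sorted xs'" using Suc.prems(3) xs by auto
  have pys: "parity_strict ys'" using Suc.prems(4) ys ps_tail by blast
  have mn: "\<forall>z\<in>set ys'. min p q < z" using ps_min Suc.prems(4) ys by blast
  have ms: "mset (p # q # ys') = mset (x # y # xs')" using Suc.prems(5) xs ys by simp
  have setq: "set (p # q # ys') = set (x # y # xs')" using mset_eq_setD[OF ms] .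
  have xge: "\<forall>z\<in>set (x # y # xs'). x \<le> z" using sxs by auto
  have mx: "min p q = x"
  proof -
    have "p \<in> set (x # y # xs')" "q \<in> set (x # y # xs')" using setq by (metis list.set_intros(1), metis list.set_intros(1,2))
    then have "x \<le> p" "x \<le> q" using xge by auto
    then have "min p q \<ge> x" by simp
    moreover have "x \<in> set (p # q # ys')" using setq by simp
    ultimately show ?thesis using mn by (auto simp: min_def split: if_splits)
  qed
  define w where "w = max p q"
  have pq: "(p = x \<and> q = w) \<or> (p = w \<and> q = x)" using mx w_def by (auto simp: min_def max_def)
  have ms2: "mset (w # ys') = mset (y # xs')"
    using ms pq by auto
  have wy: "w = y"
  proof (rule ccontr)
    assume ne: "w \<noteq> y"
    have "y \<in> set (w # ys')" using mset_eq_setD[OF ms2] by simp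
    then have "y \<in> set ys'" using ne by simp
    then have xy: "x < y" using mn mx by auto
    have zy: "\<forall>z\<in>set ys'. y \<le> z"
    proof
      fix z assume "z \<in> set ys'"
      then have "z \<in> set (y # xs')" using mset_eq_setD[OF ms2] by auto
      then show "y \<le> z" using sxs by auto
    qed
    have "y + c \<in> set (hp c xs)" using xs by simp
    then have "y + c \<in> set (hp c ys)" using mset_eq_setD[OF Suc.prems(6)] by simp
    then have "y + c = p + c \<or> y + c = q + c \<or> y + c \<in> set (hp (Suc c) ys')" using ys by simp
    moreover have "y + c \<notin> set (hp (Suc c) ys')" using hp_set zy by fastforce
    ultimately show False using pq ne xy by auto
  qed
  have ms3: "mset ys' = mset xs'" using ms2 wy by simp
  have "mset (hp c ys) = {#p + c, q + c#} + mset (hp (Suc c) ys')" using ys by simp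
  moreover have "mset (hp c xs) = {#x + c, y + c#} + mset (hp (Suc c) xs')" using xs by simp
  moreover have "{#p + c, q + c#} = {#x + c, y + c#}" using pq wy by auto
  ultimately have "mset (hp (Suc c) ys') = mset (hp (Suc c) xs')" using Suc.prems(6) by simp
  then have IH: "blk xs' ys'" using Suc.IH len sxs(3) pys ms3 by blast
  show ?case unfolding blk_def
  proof (intro allI impI)
    fix i assume i: "even i" "i + 1 < length xs"
    show "(ys ! i = xs ! i \<and> ys ! (i+1) = xs ! (i+1)) \<or> (ys ! i = xs ! (i+1) \<and> ys ! (i+1) = xs ! i)"
    proof (cases "i \<ge> 2")
      case True
      define j where "j = i - 2"
      have j: "i = j + 2" using True unfolding j_def by simp
      have "even j" "j + 1 < length xs'" using i j xs by auto
      then show ?thesis using IH j xs ys unfolding blk_def by simp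
    next
      case False
      then have "i = 0" using i by (auto elim: evenE)
      then show ?thesis using pq wy xs ys by auto
    qed
  qed
qed

lemma stage1:
  assumes "even N" "length a = N + 1" "sorted a" "parity_strict a" "b \<in> E_set a"
    "mset (hat b) = mset (hat a)"
  shows "b ! 0 = a ! 0 \<and> (\<forall>i. odd i \<longrightarrow> i < N \<longrightarrow>
     (b ! i = a ! i \<and> b ! (i+1) = a ! (i+1)) \<or> (b ! i = a ! (i+1) \<and> b ! (i+1) = a ! i))"
proof -
  obtain a0 as where a: "a = a0 # as" using assms(2) by (cases a) auto
  have lb: "length b = N + 1" "parity_strict b" "mset b = mset a" using assms(2,5) by (auto simp: E_set_def)
  obtain b0 bs where b: "b = b0 # bs" using lb(1) by (cases b) auto
  have age: "\<forall>z\<in>set a. a0 \<le> z" using assms(3) a by auto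
  have "a0 \<in> set (hat a)" using a by (simp add: hat_Cons)
  then have "a0 \<in> set (hat b)" using mset_eq_setD[OF assms(6)] by simp
  then have "a0 = b0 \<or> a0 \<in> set (hp 1 bs)" using b by (simp add: hat_Cons)
  moreover have "a0 \<notin> set (hp 1 bs)"
  proof
    assume "a0 \<in> set (hp 1 bs)"
    then obtain z where "z \<in> set bs" "z + 1 \<le> a0" using hp_set by blast
    moreover have "z \<in> set a" using \<open>z \<in> set bs\<close> b mset_eq_setD[OF lb(3)] by auto
    ultimately show False using age by fastforce
  qed
  ultimately have b0: "b0 = a0" by simp
  have m1: "mset bs = mset as" using lb(3) a b b0 by simp
  have m2: "mset (hp 1 bs) = mset (hp 1 as)" using assms(6) a b b0 by (simp add: hat_Cons)
  obtain k where k: "N = 2 * k" using assms(1) by blast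
  have bl: "blk as bs"
    using L1[of as k bs 1] k a b assms(2,3) lb ps_tail m1 m2 by auto
  show ?thesis
  proof (intro conjI allI impI)
    show "b ! 0 = a ! 0" using a b b0 by simp
    fix i assume i: "odd i" "i < N"
    define j where "j = i - 1"
    have j: "i = Suc j" "even j" using i unfolding j_def by (auto elim: oddE)
    have "j + 1 < length as" using i j a assms(2) by simp
    then show "(b ! i = a ! i \<and> b ! (i+1) = a ! (i+1)) \<or> (b ! i = a ! (i+1) \<and> b ! (i+1) = a ! i)"
      using bl j a b unfolding blk_def by simp
  qed
qed


context
  fixes a :: "nat list"
  assumes srt: "sorted a" and psa: "parity_strict a"
begin

lemma count_card: "count (mset a) v = card {k. k < length a \<and> a ! k = v}"
  by (simp add: count_mset count_list_eq_length_filter length_filter_conv_card eq_commute)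

lemma J_iff:
  assumes i: "i < length a"
  shows "i \<in> Jset a \<longleftrightarrow> \<not> ((Suc i < length a \<and> a ! i = a ! Suc i) \<or> (0 < i \<and> a ! (i - 1) = a ! i))"
proof -
  let ?S = "{k. k < length a \<and> a ! k = a ! i}"
  have iS: "i \<in> ?S" using i by simp
  have c1: "card ?S = 1 \<longleftrightarrow> ?S = {i}"
  proof
    assume "card ?S = 1"
    then obtain x where x: "?S = {x}" by (erule card_1_singletonE)
    then have "x = i" using iS by simp
    then show "?S = {i}" using x by simp
  qed simp
  have "i \<in> Jset a \<longleftrightarrow> card ?S = 1" using i by (simp add: Jset_def count_card)
  also have "\<dots> \<longleftrightarrow> ?S = {i}" by (rule c1)
  also have "\<dots> \<longleftrightarrow> \<not> ((Suc i < length a \<and> a ! i = a ! Suc i) \<or> (0 < i \<and> a ! (i - 1) = a ! i))"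
  proof
    assume "?S = {i}"
    then have h: "\<And>k. k < length a \<Longrightarrow> a ! k = a ! i \<Longrightarrow> k = i" by (metis (mono_tags, lifting) mem_Collect_eq singletonD)
    show "\<not> ((Suc i < length a \<and> a ! i = a ! Suc i) \<or> (0 < i \<and> a ! (i - 1) = a ! i))"
    proof
      assume "(Suc i < length a \<and> a ! i = a ! Suc i) \<or> (0 < i \<and> a ! (i - 1) = a ! i)"
      then show False
      proof
        assume "Suc i < length a \<and> a ! i = a ! Suc i"
        then show False using h[of "Suc i"] by simp
      next
        assume A: "0 < i \<and> a ! (i - 1) = a ! i"
        have "i - 1 = i" by (rule h) (use A i in auto)
        then show False using A by simp
      qed
    qed
  next
    assume nd: "\<not> ((Suc i < length a \<and> a ! i = a ! Suc i) \<or> (0 < i \<and> a ! (i - 1) = a ! i))"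
    show "?S = {i}"
    proof (intro equalityI subsetI)
      fix k assume "k \<in> ?S"
      then have k: "k < length a" "a ! k = a ! i" by auto
      show "k \<in> {i}"
      proof (rule ccontr)
        assume "k \<notin> {i}"
        then consider "k < i" | "i < k" by fastforce
        then show False
        proof cases
          case 1
          have "a ! k \<le> a ! (i - 1)" using 1 i by (intro sorted_nth_mono[OF srt]) auto
          moreover have "a ! (i - 1) \<le> a ! i" using 1 i by (intro sorted_nth_mono[OF srt]) auto
          ultimately have "a ! (i - 1) = a ! i" using k by linarith
          moreover have "0 < i" using 1 by simp
          ultimately show False using nd by blast
        next
          case 2
          have "a ! Suc i \<le> a ! k" using 2 k by (intro sorted_nth_mono[OF srt]) auto
          moreover have "a ! i \<le> a ! Suc i" using 2 k by (intro sorted_nth_mono[OF srt]) auto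
          ultimately have "a ! i = a ! Suc i" using k by linarith
          moreover have "Suc i < length a" using 2 k by simp
          ultimately show False using nd by blast
        qed
      qed
    next
      fix k assume "k \<in> {i}" then show "k \<in> ?S" using iS by simp
    qed
  qed
  finally show ?thesis .
qed

lemma strict2: "i + 2 < length a \<Longrightarrow> a ! i < a ! (i + 2)"
  using psa unfolding parity_strict_def by blast

lemma finJ: "finite (Jset a)" unfolding Jset_def by simp

lemma JsubN: "q \<in> Jset a \<Longrightarrow> q < length a" unfolding Jset_def by simp

abbreviation "L \<equiv> sorted_list_of_set (Jset a)"

lemma L_props: "sorted_wrt (<) L" "length L = card (Jset a)" "set L = Jset a"
  using finJ by auto

lemma idx_in: "s < card (Jset a) \<Longrightarrow> idx a s \<in> Jset a"
  unfolding idx_def using L_props by (metis nth_mem)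

lemma idx_less: "s < t \<Longrightarrow> t < card (Jset a) \<Longrightarrow> idx a s < idx a t"
  unfolding idx_def using L_props sorted_wrt_nth_less by metis

lemma idx_mono_iff: "s < card (Jset a) \<Longrightarrow> t < card (Jset a) \<Longrightarrow> idx a s < idx a t \<longleftrightarrow> s < t"
  using idx_less by (metis less_asym linorder_neqE_nat)

lemma idx_surj: "q \<in> Jset a \<Longrightarrow> \<exists>s < card (Jset a). idx a s = q"
  unfolding idx_def using L_props by (metis in_set_conv_nth)

lemma idx_count: assumes s: "s < card (Jset a)" shows "card (Jset a \<inter> {..<idx a s}) = s"
proof -
  have "Jset a \<inter> {..<idx a s} = idx a ` {..<s}"
  proof (intro equalityI subsetI)
    fix x assume "x \<in> Jset a \<inter> {..<idx a s}"
    then obtain t where t: "t < card (Jset a)" "idx a t = x" "x < idx a s" using idx_surj by auto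
    then have "t < s" using idx_mono_iff s by auto
    then show "x \<in> idx a ` {..<s}" using t by auto
  next
    fix x assume "x \<in> idx a ` {..<s}"
    then obtain t where "t < s" "x = idx a t" by auto
    then show "x \<in> Jset a \<inter> {..<idx a s}" using idx_in idx_less s by auto
  qed
  moreover have "inj_on (idx a) {..<s}"
  proof (rule inj_onI)
    fix x y assume xy: "x \<in> {..<s}" "y \<in> {..<s}" "idx a x = idx a y"
    show "x = y"
    proof (rule ccontr)
      assume "x \<noteq> y"
      then consider "x < y" | "y < x" by fastforce
      then show False using idx_less[of x y] idx_less[of y x] s xy by (cases, auto)
    qed
  qed
  ultimately show ?thesis by (simp add: card_image)
qed

lemma idx_between: "Suc s < card (Jset a) \<Longrightarrow> q \<in> Jset a \<Longrightarrow> idx a s < q \<Longrightarrow> q < idx a (Suc s) \<Longrightarrow> False"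
proof -
  assume s: "Suc s < card (Jset a)" and q: "q \<in> Jset a" "idx a s < q" "q < idx a (Suc s)"
  obtain t where t: "t < card (Jset a)" "idx a t = q" using idx_surj q(1) by blast
  have "s < t" using idx_mono_iff[of s t] t q s by simp
  moreover have "t < Suc s" using idx_mono_iff[of t "Suc s"] t q s by simp
  ultimately show False by simp
qed

definition "ctp i \<longleftrightarrow> i = 0 \<or> i = length a \<or> a ! (i - 1) \<noteq> a ! i"

lemma ctp_parity: "i \<le> length a \<Longrightarrow> ctp i \<Longrightarrow> even (i + card (Jset a \<inter> {..<i}))"
proof (induction i rule: less_induct)
  case (less i)
  show ?case
  proof (cases i)
    case 0 then show ?thesis by simp
  next
    case (Suc j)
    have jn: "j < length a" using less.prems Suc by simp
    show ?thesis
    proof (cases "j \<in> Jset a")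
      case True
      have cj: "ctp j" using True J_iff[OF jn] unfolding ctp_def by auto
      have "Jset a \<inter> {..<i} = insert j (Jset a \<inter> {..<j})" using True Suc by auto
      then have "card (Jset a \<inter> {..<i}) = Suc (card (Jset a \<inter> {..<j}))" using finJ by simp
      then show ?thesis using less.IH[of j] cj Suc jn by simp
    next
      case False
      have ne: "\<not> (Suc j < length a \<and> a ! j = a ! Suc j)" using less.prems(2) Suc unfolding ctp_def by auto
      then have d: "0 < j" "a ! (j - 1) = a ! j" using False J_iff[OF jn] by auto
      then obtain k where k: "j = Suc k" by (metis gr0_implies_Suc)
      have kJ: "k \<notin> Jset a" using J_iff[of k] d k jn by auto
      have ck: "ctp k"
      proof (cases k)
        case 0 then show ?thesis by (simp add: ctp_def)
      next
        case (Suc m)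
        have "a ! m < a ! (m + 2)" using strict2 Suc k jn by simp
        then show ?thesis using Suc k d unfolding ctp_def by simp
      qed
      have "Jset a \<inter> {..<i} = Jset a \<inter> {..<k}" using False kJ Suc k
        by (auto simp: less_Suc_eq)
      then show ?thesis using less.IH[of k] ck Suc k jn by simp
    qed
  qed
qed

lemma idx_parity: "s < card (Jset a) \<Longrightarrow> even (idx a s + s)"
proof -
  assume s: "s < card (Jset a)"
  have q: "idx a s \<in> Jset a" using idx_in s .
  have qn: "idx a s < length a" using JsubN q .
  have "ctp (idx a s)" using J_iff[OF qn] q unfolding ctp_def by auto
  then show ?thesis using ctp_parity qn idx_count s by fastforce
qed

lemma card_parity: "even (length a + card (Jset a))"
proof -
  have "ctp (length a)" unfolding ctp_def by simp
  moreover have "Jset a \<inter> {..<length a} = Jset a" using JsubN by auto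
  ultimately show ?thesis using ctp_parity by fastforce
qed

lemma chain0:
  assumes s: "Suc s < card (Jset a)"
  shows "idx a s < q \<Longrightarrow> q < idx a (Suc s) \<Longrightarrow> even (q - idx a s - 1) \<Longrightarrow> a ! (q - 1) \<noteq> a ! q"
proof (induction q rule: less_induct)
  case (less q)
  have sJ: "idx a s \<in> Jset a" "idx a (Suc s) \<in> Jset a" using idx_in s by auto
  have qn: "q < length a" using JsubN sJ(2) less.prems by (meson less_trans)
  show ?case
  proof (cases "q = Suc (idx a s)")
    case True
    then show ?thesis using J_iff[of "idx a s"] sJ qn by auto
  next
    case False
    have n0: "q - idx a s - 1 \<noteq> 0" using False less.prems(1) by auto
    have n1: "q - idx a s - 1 \<noteq> 1" using less.prems(3) by (metis odd_one)
    have q3: "idx a s + 3 \<le> q" using n0 n1 less.prems(1) by linarith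
    define r where "r = q - 2"
    have r: "idx a s < r" "r < q" "even (r - idx a s - 1)" using q3 less.prems unfolding r_def by auto
    have ih: "a ! (r - 1) \<noteq> a ! r" using less.IH[of r] r less.prems by simp
    have rJ: "r \<notin> Jset a" using idx_between[OF s] r less.prems by fastforce
    have "a ! r = a ! Suc r" using J_iff[of r] rJ ih qn r by auto
    moreover have "a ! r < a ! (r + 2)" using strict2 r qn unfolding r_def using q3 by simp
    ultimately show ?thesis unfolding r_def using q3 by (simp add: numeral_2_eq_2 Suc_diff_Suc)
  qed
qed

lemma chain:
  assumes s: "Suc s < card (Jset a)" "idx a s < q" "q < idx a (Suc s)" "even (q - idx a s - 1)"
  shows "a ! q = a ! Suc q"
proof -
  have sJ: "idx a (Suc s) \<in> Jset a" using idx_in s by auto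
  have qn: "q < length a" using JsubN sJ s by (meson less_trans)
  have qJ: "q \<notin> Jset a" using idx_between[OF s(1)] s by fastforce
  have "a ! (q - 1) \<noteq> a ! q" using chain0 s by blast
  then show ?thesis using J_iff[OF qn] qJ by auto
qed

end


lemma par_diff: "(m::nat) \<le> n \<Longrightarrow> even (n - m) \<longleftrightarrow> (even n \<longleftrightarrow> even m)"
  by (metis add_diff_cancel_left' even_add le_Suc_ex)

lemma par_diff2: "(m::nat) \<le> n \<Longrightarrow> n \<noteq> m \<Longrightarrow> odd m \<Longrightarrow> odd n \<Longrightarrow> m + 2 \<le> n"
proof -
  assume h: "m \<le> n" "n \<noteq> m" "odd m" "odd n"
  then obtain d where d: "n = m + d" using le_Suc_ex by blast
  then have "even d" "d \<noteq> 0" using h by auto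
  then have "2 \<le> d" by (auto elim!: evenE)
  then show ?thesis using d by simp
qed

context
  fixes N :: nat and a b :: "nat list"
  assumes evN: "even N" and la: "length a = N + 1" and srt: "sorted a" and psa: "parity_strict a"
    and bE: "b \<in> E_set a" and hb: "mset (hat b) = mset (hat a)"
begin

lemma lb: "length b = N + 1" using bE la by (simp add: E_set_def)
lemma psb: "parity_strict b" using bE by (simp add: E_set_def)
lemma psb2: "i + 2 < N + 1 \<Longrightarrow> b ! i < b ! (i + 2)" using psb lb unfolding parity_strict_def by simp
lemma psa2: "i + 2 < N + 1 \<Longrightarrow> a ! i < a ! (i + 2)" using psa la unfolding parity_strict_def by simp

lemma st0: "b ! 0 = a ! 0" by (rule conjunct1[OF stage1[OF evN la srt psa bE hb]])
lemma st: "odd i \<Longrightarrow> i < N \<Longrightarrow>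
     (b ! i = a ! i \<and> b ! (i+1) = a ! (i+1)) \<or> (b ! i = a ! (i+1) \<and> b ! (i+1) = a ! i)"
  by (rule conjunct2[OF stage1[OF evN la srt psa bE hb], rule_format])

lemma cardJ: "card (Jset a) = 2 * MM a + 1"
proof -
  have "even (length a + card (Jset a))" using card_parity[OF srt psa] .
  then have "odd (card (Jset a))" using la evN by simp
  then show ?thesis unfolding MM_def by (auto elim!: oddE)
qed

lemma par: "s < card (Jset a) \<Longrightarrow> idx a s mod 2 = s mod 2"
proof -
  assume "s < card (Jset a)"
  then have "even (idx a s + s)" using idx_parity[OF srt psa] by blast
  then show ?thesis by (auto simp: mod2_eq_if)
qed

lemma gap: assumes s: "s < 2 * MM a" shows "idx a (s + 1) = idx a s + 2 * mm a s + 1"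
proof -
  have s1: "s + 1 < card (Jset a)" using s cardJ by simp
  have lt: "idx a s < idx a (s + 1)" using idx_less[OF srt psa] s1 by simp
  have e1: "even (idx a s + s)" using idx_parity[OF srt psa] s1 by simp
  have e2: "even (idx a (s + 1) + (s + 1))" using idx_parity[OF srt psa] s1 by simp
  have "even (idx a (s + 1) - idx a s - 1)" using e1 e2 lt by (simp add: par_diff)
  then show ?thesis unfolding mm_def using lt by (auto elim!: evenE)
qed

lemma idxN: "s < card (Jset a) \<Longrightarrow> idx a s < N + 1"
proof -
  assume "s < card (Jset a)"
  then have "idx a s \<in> Jset a" by (rule idx_in[OF srt psa])
  then have "idx a s < length a" by (rule JsubN[OF srt psa])
  then show ?thesis using la by simp
qed

lemma fwd:
  assumes s: "s < 2 * MM a" "odd s" "b ! idx a s \<noteq> a ! idx a s"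
  shows "odd p \<Longrightarrow> idx a s \<le> p \<Longrightarrow> p < idx a (s + 1) \<Longrightarrow> b ! p = a ! (p + 1) \<and> b ! (p + 1) = a ! p"
proof (induction p rule: less_induct)
  case (less p)
  have s1: "Suc s < card (Jset a)" using s cardJ by simp
  have "p < N + 1" using idxN[OF s1] less.prems(3) by simp
  moreover have "p \<noteq> N" using less.prems(1) evN by auto
  ultimately have pN: "p < N" by simp
  have "idx a s mod 2 = s mod 2" using par s1 by simp
  then have ois: "odd (idx a s)" using s(2) by (auto simp: mod2_eq_if split: if_splits)
  show ?case
  proof (cases "p = idx a s")
    case True
    then show ?thesis using st[of p] less.prems pN s(3) by auto
  next
    case False
    then have p2: "idx a s + 2 \<le> p" using par_diff2[of "idx a s" p] False less.prems ois by simp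
    define r where "r = p - 2"
    have r: "odd r" "idx a s \<le> r" "r < p" "p = r + 2" using p2 less.prems unfolding r_def by auto
    have ih: "b ! r = a ! (r + 1) \<and> b ! (r + 1) = a ! r" using less.IH[of r] r less.prems by simp
    have "even (Suc r - idx a s - 1)" using r ois by simp
    then have ch: "a ! Suc r = a ! Suc (Suc r)" using chain[OF srt psa s1, of "Suc r"] r less.prems by simp
    have "b ! r < b ! (r + 2)" using psb2 r pN by simp
    then show ?thesis using st[of p] less.prems pN ih ch r by auto
  qed
qed

lemma bwd:
  "odd p \<Longrightarrow> p < N \<Longrightarrow> b ! p \<noteq> a ! p \<Longrightarrow>
   \<exists>p'. p' \<le> p \<and> odd p' \<and> p' \<in> Jset a \<and> b ! p' \<noteq> a ! p' \<and> (\<forall>q. p' < q \<longrightarrow> q \<le> p \<longrightarrow> q \<notin> Jset a)"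
proof (induction p rule: less_induct)
  case (less p)
  show ?case
  proof (cases "p \<in> Jset a")
    case True then show ?thesis using less.prems by auto
  next
    case False
    have sw: "b ! p = a ! (p + 1)" "b ! (p + 1) = a ! p" using st[of p] less.prems by auto
    have pn: "p < length a" using less.prems la by simp
    have d: "0 < p" "a ! (p - 1) = a ! p" using J_iff[OF srt psa pn] False sw less.prems(3) by auto
    show ?thesis
    proof (cases "p = 1")
      case True
      have "b ! 0 < b ! (0 + 2)" by (rule psb2) (use less.prems True in simp)
      then show ?thesis using st0 sw d True by (simp add: numeral_2_eq_2)
    next
      case False
      define r where "r = p - 2"
      have r: "odd r" "r < p" "p = r + 2" using False less.prems d unfolding r_def
        by (auto elim!: oddE)
      have "b ! (r + 1) < b ! (r + 1 + 2)" by (rule psb2) (use r less.prems in simp)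
      then have swr: "b ! r = a ! (r + 1) \<and> b ! (r + 1) = a ! r" using st[of r] r less.prems sw d
        by (auto simp: numeral_3_eq_3)
      have "a ! r < a ! (r + 2)" using psa2 r less.prems by simp
      then have "b ! r \<noteq> a ! r" using swr d r by simp
      then obtain p' where p': "p' \<le> r" "odd p'" "p' \<in> Jset a" "b ! p' \<noteq> a ! p'"
          "\<forall>q. p' < q \<longrightarrow> q \<le> r \<longrightarrow> q \<notin> Jset a"
        using less.IH[of r] r less.prems by auto
      have "p - 1 \<notin> Jset a" using J_iff[OF srt psa, of "p - 1"] d pn by auto
      have "\<forall>q. p' < q \<longrightarrow> q \<le> p \<longrightarrow> q \<notin> Jset a"
      proof (intro allI impI)
        fix q assume q: "p' < q" "q \<le> p"
        show "q \<notin> Jset a"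
        proof (cases "q \<le> r")
          case True then show ?thesis using p'(5) q by simp
        next
          case False
          then have "q = p - 1 \<or> q = p" using q r by linarith
          then show ?thesis using \<open>p - 1 \<notin> Jset a\<close> \<open>p \<notin> Jset a\<close> by blast
        qed
      qed
      then show ?thesis using p' r by (intro exI[of _ p']) auto
    qed
  qed
qed

lemma main4: "\<exists>X. X \<subseteq> {s. odd s \<and> s \<le> 2 * MM a - 1} \<and> b = aX a X"
proof -
  define X where "X = {s. odd s \<and> s \<le> 2 * MM a - 1 \<and> b ! idx a s \<noteq> a ! idx a s}"
  have Xs: "\<And>s. s \<in> X \<Longrightarrow> s < 2 * MM a \<and> odd s \<and> b ! idx a s \<noteq> a ! idx a s"
    unfolding X_def by (auto elim!: oddE)
  have oddidx: "\<And>s. s < card (Jset a) \<Longrightarrow> odd s \<Longrightarrow> odd (idx a s)"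
  proof -
    fix s assume "s < card (Jset a)" "odd s"
    then show "odd (idx a s)" using par[of s] by (auto simp: mod2_eq_if split: if_splits)
  qed
  have evidx: "\<And>s. s < card (Jset a) \<Longrightarrow> even s \<Longrightarrow> even (idx a s)"
  proof -
    fix s assume "s < card (Jset a)" "even s"
    then show "even (idx a s)" using par[of s] by (auto simp: mod2_eq_if split: if_splits)
  qed
  have "b = aX a X"
  proof (rule nth_equalityI)
    show "length b = length (aX a X)" using lb la by (simp add: aX_def)
    fix i assume "i < length b"
    then have i: "i < N + 1" using lb by simp
    have aXi: "aX a X ! i = (if (\<exists>s\<in>X. idx a s \<le> i \<and> i \<le> idx a s + 2 * mm a s + 1 \<and> even (i - idx a s))
      then a ! (i + 1)
      else if (\<exists>s\<in>X. idx a s \<le> i \<and> i \<le> idx a s + 2 * mm a s + 1 \<and> odd (i - idx a s))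
      then a ! (i - 1)
      else a ! i)" unfolding aX_def by (simp only: nth_map length_map length_upt nth_upt diff_zero add_0 la i)
    define C1 where "C1 \<longleftrightarrow> (\<exists>s\<in>X. idx a s \<le> i \<and> i \<le> idx a s + 2 * mm a s + 1 \<and> even (i - idx a s))"
    define C2 where "C2 \<longleftrightarrow> (\<exists>s\<in>X. idx a s \<le> i \<and> i \<le> idx a s + 2 * mm a s + 1 \<and> odd (i - idx a s))"
    have aXi': "aX a X ! i = (if C1 then a ! (i + 1) else if C2 then a ! (i - 1) else a ! i)"
      unfolding C1_def C2_def by (rule aXi)
    show "b ! i = aX a X ! i"
    proof (cases C1)
      case True
      then obtain s where s: "s \<in> X" "idx a s \<le> i" "i \<le> idx a s + 2 * mm a s + 1" "even (i - idx a s)" unfolding C1_def by blast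
      have s2: "s < 2 * MM a" "odd s" "b ! idx a s \<noteq> a ! idx a s" using Xs s(1) by auto
      have c: "s + 1 < card (Jset a)" using s2 cardJ by simp
      have g: "idx a (s + 1) = idx a s + 2 * mm a s + 1" using gap s2 by simp
      have o1: "odd (idx a s)" using oddidx c s2 by simp
      have o2: "even (idx a (s + 1))" using evidx c s2 by simp
      have io: "odd i" using o1 s(2,4) by (simp add: par_diff)
      have "i < idx a (s + 1)" using g s(3) io o2 by (cases "i = idx a (s + 1)") auto
      then have "b ! i = a ! (i + 1)" using fwd[OF s2, of i] io s(2) by simp
      then show ?thesis using aXi' True by simp
    next
      case F1: False
      show ?thesis
      proof (cases C2)
        case True
        then obtain s where s: "s \<in> X" "idx a s \<le> i" "i \<le> idx a s + 2 * mm a s + 1" "odd (i - idx a s)" unfolding C2_def by blast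
        have s2: "s < 2 * MM a" "odd s" "b ! idx a s \<noteq> a ! idx a s" using Xs s(1) by auto
        have c: "s + 1 < card (Jset a)" using s2 cardJ by simp
        have g: "idx a (s + 1) = idx a s + 2 * mm a s + 1" using gap s2 by simp
        have o1: "odd (idx a s)" using oddidx c s2 by simp
        have ie: "even i" using o1 s(2,4) by (simp add: par_diff)
        have ip: "idx a s < i" using s(2) ie o1 by (cases "i = idx a s") auto
        define p where "p = i - 1"
        have p: "odd p" "idx a s \<le> p" "p < idx a (s + 1)" "i = p + 1"
          using ie ip g s(3) unfolding p_def by auto
        have "b ! (p + 1) = a ! p" using fwd[OF s2, of p] p by simp
        then have bi: "b ! i = a ! (i - 1)" using p by simp
        have "aX a X ! i = a ! (i - 1)" using aXi' F1 True by simp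
        then show ?thesis using bi by simp
      next
        case F2: False
        have "b ! i = a ! i"
        proof (cases "i = 0")
          case True then show ?thesis using st0 by simp
        next
          case nz: False
          show ?thesis
          proof (cases "odd i")
            case True
            have iN: "i < N" using i True evN by (cases "i = N") auto
            show ?thesis
            proof (rule ccontr)
              assume ne: "b ! i \<noteq> a ! i"
              obtain p' where p': "p' \<le> i" "odd p'" "p' \<in> Jset a" "b ! p' \<noteq> a ! p'"
                  "\<forall>q. p' < q \<longrightarrow> q \<le> i \<longrightarrow> q \<notin> Jset a"
                using bwd[OF True iN ne] by blast
              obtain s where s: "s < card (Jset a)" "idx a s = p'" using idx_surj[OF srt psa p'(3)] by blast
              have so: "odd s" using par[OF s(1)] s(2) p'(2) by (auto simp: mod2_eq_if split: if_splits)
              have s2: "s < 2 * MM a" using s(1) so cardJ by (cases "s = 2 * MM a") auto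
              have sX: "s \<in> X" unfolding X_def using s2 so s p' by auto
              have c: "s + 1 < card (Jset a)" using s2 cardJ by simp
              have "idx a (s + 1) \<in> Jset a" using idx_in[OF srt psa c] .
              moreover have "idx a s < idx a (s + 1)" using idx_less[OF srt psa] c by simp
              ultimately have "i < idx a (s + 1)" using p'(5) s(2) not_le by blast
              then have "i \<le> idx a s + 2 * mm a s + 1" using gap[OF s2] by simp
              moreover have "even (i - idx a s)" using True p'(1,2) s(2) by (simp add: par_diff)
              ultimately show False using F1 sX p'(1) s(2) unfolding C1_def by blast
            qed
          next
            case False
            define p where "p = i - 1"
            have p: "odd p" "i = p + 1" "p < N" using False nz i evN unfolding p_def
              by (auto elim!: evenE)
            show ?thesis
            proof (cases "b ! p = a ! p \<and> b ! (p+1) = a ! (p+1)")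
              case True then show ?thesis using p by simp
            next
              case nsw: False
              then have sw: "b ! p = a ! (p+1)" "b ! (p+1) = a ! p" using st[of p] p by auto
              show ?thesis
              proof (cases "a ! p = a ! (p+1)")
                case True then show ?thesis using sw p by simp
              next
                case ne0: False
                then have ne: "b ! p \<noteq> a ! p" using sw by simp
                obtain p' where p': "p' \<le> p" "odd p'" "p' \<in> Jset a" "b ! p' \<noteq> a ! p'"
                    "\<forall>q. p' < q \<longrightarrow> q \<le> p \<longrightarrow> q \<notin> Jset a"
                  using bwd[OF p(1) p(3) ne] by blast
                obtain s where s: "s < card (Jset a)" "idx a s = p'" using idx_surj[OF srt psa p'(3)] by blast
                have so: "odd s" using par[OF s(1)] s(2) p'(2) by (auto simp: mod2_eq_if split: if_splits)
                have s2: "s < 2 * MM a" using s(1) so cardJ by (cases "s = 2 * MM a") auto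
                have sX: "s \<in> X" unfolding X_def using s2 so s p' by auto
                have c: "s + 1 < card (Jset a)" using s2 cardJ by simp
                have "idx a (s + 1) \<in> Jset a" using idx_in[OF srt psa c] .
                moreover have "idx a s < idx a (s + 1)" using idx_less[OF srt psa] c by simp
                ultimately have "p < idx a (s + 1)" using p'(5) s(2) not_le by blast
                then have "i \<le> idx a s + 2 * mm a s + 1" using gap[OF s2] p by simp
                moreover have "odd (i - idx a s)" using p p'(1,2) s(2) by (simp add: par_diff)
                moreover have "idx a s \<le> i" using p p'(1) s(2) by simp
                ultimately show ?thesis using F2 sX unfolding C2_def by blast
              qed
            qed
          qed
        qed
        moreover have "aX a X ! i = a ! i" using aXi' F1 F2 by simp
        ultimately show ?thesis by simp
      qed
    qed
  qed
  moreover have "X \<subseteq> {s. odd s \<and> s \<le> 2 * MM a - 1}" unfolding X_def by auto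
  ultimately show ?thesis by blast
qed

end


theorem lemma1p2:
  fixes N :: nat and a b :: "nat list"
  assumes "even N"
    and "length a = N + 1"
    and "sorted a"
    and "parity_strict a"
    and "b \<in> E_set a"
    and "mset (hat b) = mset (hat a)"
  shows "card (Jset a) = 2 * MM a + 1
       \<and> (\<forall>s \<le> 2 * MM a. idx a s mod 2 = s mod 2)
       \<and> (\<forall>s < 2 * MM a. idx a (s + 1) = idx a s + 2 * mm a s + 1)
       \<and> (\<exists>X. X \<subseteq> {s. odd s \<and> s \<le> 2 * MM a - 1} \<and> b = aX a X)"
proof (intro conjI allI impI)
  have c: "card (Jset a) = 2 * MM a + 1" by (rule cardJ[OF assms])
  then show "card (Jset a) = 2 * MM a + 1" .
  fix s assume "s \<le> 2 * MM a"
  then have "s < card (Jset a)" using c by simp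
  then show "idx a s mod 2 = s mod 2" by (rule par[OF assms])
next
  fix s assume "s < 2 * MM a"
  then show "idx a (s + 1) = idx a s + 2 * mm a s + 1" by (rule gap[OF assms])
next
  show "\<exists>X. X \<subseteq> {s. odd s \<and> s \<le> 2 * MM a - 1} \<and> b = aX a X" by (rule main4[OF assms])
qed

end
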